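(* Let $X\in\mathbb{R}^{n\times p}$ with columns $X_1,\ldots,X_p$, let $\lambda_1>0$, and assume $np<p(p-1)/2$. (SPLICE) Let $D\in\mathbb{R}^{p\times p}$ be any diagonal matrix with positive diagonal entries (the previous iterate $\hat D^{(i-1)}$). Then there is a minimizer $\hat B$, over matrices $B\in\mathbb{R}^{p\times p}$ with zero diagonal, of $$ -\tfrac12\log\det D + \tfrac12\sum_{m=1}^p \frac{1}{D_{mm}^2}\big\|X_m - X_{-m}(B_{m\cdot})^T\big\|_2^2 + \lambda_1\|B\|_1 $$ such that $\hat\Omega^{\mathrm{spl}} = D^{-2}(I-\hat B)$ satisfies $\operatorname{card}\operatorname{vech}\hat\Omega^{\mathrm{spl}}\le np$. (SPACE) Let $\Omega_{\mathrm{diag}}$ be any diagonal matrix with positive diagonal entries (the previous iterate). Then there is a minimizer $\hat\Omega_{\mathrm{off}}$, over symmetric matrices $\Omega_{\mathrm{off}}\in\mathbb{R}^{p\times p}$ with zero diagonal, of $$ -\tfrac12\log\det\Omega_{\mathrm{diag}} + \tfrac12\sum_{m=1}^p\Omega_{\mathrm{diag},mm}\Big\|X_m-\sum_{j\ne m}\Omega_{\mathrm{off},mj}\sqrt{\Omega_{\mathrm{diag},jj}/\Omega_{\mathrm{diag},mm}}\,X_j\Big\|_2^2+\lambda_1\|\Omega_{\mathrm{off}}\|_1 $$ such that $\hat\Omega^{\mathrm{spc}} = \Omega_{\mathrm{diag}}+\hat\Omega_{\mathrm{off}}$ satisfies $\operatorname{card}\operatorname{vech}\hat\Omega^{\mathrm{spc}}\le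 np$. That is, for every iteration $i$ of the alternating minimization defining the SPLICE and SPACE estimators, there exist SPLICE and SPACE estimates at the end of iteration $i$ with at most $np$ nonzero strictly lower-triangular entries.
   Context: The SPLICE estimator alternately minimizes the displayed SPLICE objective over a diagonal matrix $D$ and a zero-diagonal matrix $B$, forming at iteration $i$ the estimate $\hat\Omega^{\mathrm{spl},(i)} = (\hat D^{(i-1)})^{-2}(I-\hat B^{(i)})$, where $\hat B^{(i)}$ minimizes over $B$ with $D=\hat D^{(i-1)}$ fixed. The SPACE estimator alternately minimizes the displayed SPACE objective over $\Omega_{\mathrm{diag}}$ and $\Omega_{\mathrm{off}}$, with estimate $\hat\Omega^{\mathrm{spc},(i)} = \hat\Omega^{(i)}_{\mathrm{diag}}+\hat\Omega^{(i)}_{\mathrm{off}}$. $X_{-m}$ is $X$ with column $m$ removed; $B_{m\cdot}$ is the $m$th row of $B$ with the entry $B_{mm}$ removed; $\|\cdot\|_1$ is the elementwise $\ell_1$ norm. $\operatorname{vech}$ gives the vector of strictly lower-triangular entries of a $p\times p$ matrix, and $\operatorname{card}$ counts nonzero entries. *)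

theory Defs
  imports "HOL-Analysis.Analysis"
begin

text \<open>Matrices are represented as functions nat => nat => real; a p x p matrix
is one that vanishes outside {0..<p} x {0..<p}. The data matrix X is n x p,
with entry X i j for row i < n, column j < p (0-based indices).\<close>

definition sq_mat :: "nat \<Rightarrow> (nat \<Rightarrow> nat \<Rightarrow> real) \<Rightarrow> bool" where
  "sq_mat p A \<longleftrightarrow> (\<forall>i j. (i \<ge> p \<or> j \<ge> p) \<longrightarrow> A i j = 0)"

definition diag_pos :: "nat \<Rightarrow> (nat \<Rightarrow> nat \<Rightarrow> real) \<Rightarrow> bool" where
  "diag_pos p D \<longleftrightarrow> sq_mat p D \<and> (\<forall>i j. i \<noteq> j \<longrightarrow> D i j = 0) \<and> (\<forall>i<p. D i i > 0)"

definition zero_diag :: "nat \<Rightarrow> (nat \<Rightarrow> nat \<Rightarrow> real) \<Rightarrow> bool" where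
  "zero_diag p B \<longleftrightarrow> sq_mat p B \<and> (\<forall>i. B i i = 0)"

definition detp :: "nat \<Rightarrow> (nat \<Rightarrow> nat \<Rightarrow> real) \<Rightarrow> real" where
  "detp p A = (\<Sum>\<sigma> | \<sigma> permutes {..<p}. of_int (sign \<sigma>) * (\<Prod>i<p. A i (\<sigma> i)))"

definition l1 :: "nat \<Rightarrow> (nat \<Rightarrow> nat \<Rightarrow> real) \<Rightarrow> real" where
  "l1 p A = (\<Sum>i<p. \<Sum>j<p. \<bar>A i j\<bar>)"

definition sqn :: "nat \<Rightarrow> (nat \<Rightarrow> real) \<Rightarrow> real" where
  "sqn n v = (\<Sum>i<n. (v i)\<^sup>2)"

definition card_vech :: "nat \<Rightarrow> (nat \<Rightarrow> nat \<Rightarrow> real) \<Rightarrow> nat" where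
  "card_vech p A = card {(i, j). j < i \<and> i < p \<and> A i j \<noteq> 0}"

definition splice_obj ::
  "nat \<Rightarrow> nat \<Rightarrow> (nat \<Rightarrow> nat \<Rightarrow> real) \<Rightarrow> real \<Rightarrow> (nat \<Rightarrow> nat \<Rightarrow> real)
   \<Rightarrow> (nat \<Rightarrow> nat \<Rightarrow> real) \<Rightarrow> real" where
  "splice_obj n p X lam D B =
     - (1/2) * ln (detp p D)
     + (1/2) * (\<Sum>m<p. (1 / (D m m)\<^sup>2) *
          sqn n (\<lambda>i. X i m - (\<Sum>j\<in>{..<p} - {m}. B m j * X i j)))
     + lam * l1 p B"

definition space_obj ::
  "nat \<Rightarrow> nat \<Rightarrow> (nat \<Rightarrow> nat \<Rightarrow> real) \<Rightarrow> real \<Rightarrow> (nat \<Rightarrow> nat \<Rightarrow> real)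
   \<Rightarrow> (nat \<Rightarrow> nat \<Rightarrow> real) \<Rightarrow> real" where
  "space_obj n p X lam Od Oo =
     - (1/2) * ln (detp p Od)
     + (1/2) * (\<Sum>m<p. Od m m *
          sqn n (\<lambda>i. X i m - (\<Sum>j\<in>{..<p} - {m}. Oo m j * sqrt (Od j j / Od m m) * X i j)))
     + lam * l1 p Oo"

definition splice_est :: "(nat \<Rightarrow> nat \<Rightarrow> real) \<Rightarrow> (nat \<Rightarrow> nat \<Rightarrow> real) \<Rightarrow> nat \<Rightarrow> nat \<Rightarrow> real" where
  "splice_est D B i j = (1 / (D i i)\<^sup>2) * ((if i = j then 1 else 0) - B i j)"

end

theory Submission
  imports Defs "HOL-Analysis.Analysis"
begin


definition lassoF :: "'o set \<Rightarrow> 'k set \<Rightarrow> ('o \<Rightarrow> real) \<Rightarrow> ('o \<Rightarrow> real) \<Rightarrow> ('o \<Rightarrow> 'k \<Rightarrow> real) \<Rightarrow> ('k \<Rightarrow> real) \<Rightarrow> ('k \<Rightarrow> real) \<Rightarrow> real" where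
 "lassoF N K c y A w b = (\<Sum>q\<in>N. c q * (y q - (\<Sum>k\<in>K. A q k * b k))\<^sup>2) + (\<Sum>k\<in>K. w k * \<bar>b k\<bar>)"

lemma lasso_cont: "continuous_on UNIV (lassoF N K c y A w)"
  unfolding lassoF_def
  by (intro continuous_intros continuous_on_product_then_coordinatewise continuous_on_id)

lemma lasso_exists:
  assumes K: "finite K" and N: "finite N" and c: "\<And>q. q \<in> N \<Longrightarrow> c q \<ge> 0" and w: "\<And>k. k \<in> K \<Longrightarrow> w k > 0"
  shows "\<exists>b. (\<forall>k. k \<notin> K \<longrightarrow> b k = 0) \<and> (\<forall>b'. (\<forall>k. k \<notin> K \<longrightarrow> b' k = 0) \<longrightarrow> lassoF N K c y A w b \<le> lassoF N K c y A w b')"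
proof -
  let ?F = "lassoF N K c y A w"
  define S where "S = PiE UNIV (\<lambda>k. if k \<in> K then {- (?F (\<lambda>_. 0) / w k) .. ?F (\<lambda>_. 0) / w k} else {0::real})"
  have "compactin (product_topology (\<lambda>i. euclidean) UNIV) S"
    unfolding S_def compactin_PiE by auto
  hence cS: "compact S" by (simp add: euclidean_product_topology)
  have 0: "(\<lambda>_. 0) \<in> S"
  proof -
    have "?F (\<lambda>_. 0) \<ge> 0" unfolding lassoF_def using c by (auto intro!: sum_nonneg)
    thus ?thesis unfolding S_def using w by (auto simp: PiE_iff intro!: divide_nonneg_pos)
  qed
  obtain b where bS: "b \<in> S" and bmin: "\<And>b'. b' \<in> S \<Longrightarrow> ?F b \<le> ?F b'"
    using continuous_attains_inf[OF cS _ continuous_on_subset[OF lasso_cont]] 0 by blast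
  have Fge: "w k * \<bar>b' k\<bar> \<le> ?F b'" if "k \<in> K" for k b'
  proof -
    have "w k * \<bar>b' k\<bar> \<le> (\<Sum>k\<in>K. w k * \<bar>b' k\<bar>)"
      using that K w by (intro member_le_sum) (auto simp: less_imp_le)
    also have "\<dots> \<le> ?F b'" unfolding lassoF_def using c by (auto intro!: sum_nonneg)
    finally show ?thesis .
  qed
  show ?thesis
  proof (intro exI conjI allI impI)
    show "b k = 0" if "k \<notin> K" for k
    proof -
      have "b k \<in> (if k \<in> K then {- (?F (\<lambda>_. 0) / w k) .. ?F (\<lambda>_. 0) / w k} else {0::real})"
        using bS unfolding S_def PiE_iff by blast
      thus ?thesis using that by simp
    qed
    fix b' assume b': "\<forall>k. k \<notin> K \<longrightarrow> b' k = (0::real)"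
    show "?F b \<le> ?F b'"
    proof (cases "b' \<in> S")
      case True then show ?thesis by (rule bmin)
    next
      case False
      then obtain k where k0: "b' k \<notin> (if k \<in> K then {- (?F (\<lambda>_. 0) / w k) .. ?F (\<lambda>_. 0) / w k} else {0::real})"
        unfolding S_def PiE_iff by auto
      have k: "k \<in> K" "\<bar>b' k\<bar> > ?F (\<lambda>_. 0) / w k"
        using k0 b' by (auto split: if_splits)
      have "?F (\<lambda>_. 0) < w k * \<bar>b' k\<bar>" using k w[OF k(1)] by (simp add: field_simps)
      also have "\<dots> \<le> ?F b'" using Fge k by blast
      finally show ?thesis using bmin[OF 0] by linarith
    qed
  qed
qed

lemma homog:
  fixes A :: "'q \<Rightarrow> 'k \<Rightarrow> real"
  assumes "finite E" "finite U" "card E < card U"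
  shows "\<exists>d. (\<forall>k. k \<notin> U \<longrightarrow> d k = 0) \<and> (\<exists>k\<in>U. d k \<noteq> 0) \<and> (\<forall>e\<in>E. (\<Sum>k\<in>U. A e k * d k) = 0)"
  using assms
proof (induction E arbitrary: U A rule: finite_induct)
  case empty
  then obtain k where "k \<in> U" by (metis card.empty all_not_in_conv less_irrefl)
  then show ?case by (intro exI[of _ "\<lambda>j. if j = k then 1 else 0"]) auto
next
  case (insert e E)
  show ?case
  proof (cases "\<forall>k\<in>U. A e k = 0")
    case True
    have "card E < card U" using insert by simp
    then obtain d where d: "\<forall>k. k \<notin> U \<longrightarrow> d k = 0" "\<exists>k\<in>U. d k \<noteq> 0" "\<forall>e\<in>E. (\<Sum>k\<in>U. A e k * d k) = 0"
      using insert.IH[OF insert.prems(1)] by blast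
    then show ?thesis using True by (intro exI[of _ d]) auto
  next
    case False
    then obtain k0 where k0: "k0 \<in> U" "A e k0 \<noteq> 0" by blast
    define U' where "U' = U - {k0}"
    define A' where "A' = (\<lambda>e' k. A e' k - A e' k0 * A e k / A e k0)"
    have fU': "finite U'" using insert.prems U'_def by simp
    have "card U' = card U - 1" using k0 insert.prems U'_def by simp
    hence cU': "card E < card U'" using insert by simp
    obtain d' where d': "\<forall>k. k \<notin> U' \<longrightarrow> d' k = 0" "\<exists>k\<in>U'. d' k \<noteq> 0" "\<forall>e'\<in>E. (\<Sum>k\<in>U'. A' e' k * d' k) = 0"
      using insert.IH[OF fU' cU', of A'] by blast
    define S where "S = (\<Sum>k\<in>U'. A e k * d' k)"
    define d where "d = d'(k0 := - S / A e k0)"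
    have sumU: "(\<Sum>k\<in>U. B k * d k) = (\<Sum>k\<in>U'. B k * d' k) + B k0 * (- S / A e k0)" for B
    proof -
      have "(\<Sum>k\<in>U. B k * d k) = B k0 * d k0 + (\<Sum>k\<in>U'. B k * d k)"
        unfolding U'_def using k0 insert.prems by (simp add: sum.remove)
      also have "(\<Sum>k\<in>U'. B k * d k) = (\<Sum>k\<in>U'. B k * d' k)"
        unfolding d_def U'_def by (intro sum.cong) auto
      finally show ?thesis by (simp add: d_def)
    qed
    show ?thesis
    proof (intro exI[of _ d] conjI allI impI ballI)
      show "d k = 0" if "k \<notin> U" for k using that d' k0 unfolding d_def U'_def by auto
      show "\<exists>k\<in>U. d k \<noteq> 0" using d'(2) unfolding d_def U'_def by auto
      fix e' assume "e' \<in> insert e E"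
      then consider "e' = e" | "e' \<in> E" by blast
      then show "(\<Sum>k\<in>U. A e' k * d k) = 0"
      proof cases
        case 1 then show ?thesis using sumU[of "A e"] k0 by (simp add: S_def)
      next
        case 2
        have "0 = (\<Sum>k\<in>U'. A' e' k * d' k)" using d'(3) 2 by simp
        also have "\<dots> = (\<Sum>k\<in>U'. A e' k * d' k) - A e' k0 / A e k0 * S"
          unfolding A'_def S_def by (simp add: algebra_simps sum_subtractf sum_distrib_left)
        finally show ?thesis using sumU[of "A e' "] k0 by (simp add: field_simps)
      qed
    qed
  qed
qed

lemma abs_shift:
  fixes b d t :: real
  assumes "\<bar>t\<bar> * \<bar>d\<bar> \<le> \<bar>b\<bar>"
  shows "\<bar>b + t * d\<bar> = \<bar>b\<bar> + t * (sgn b * d)"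
proof -
  have td: "\<bar>t * d\<bar> \<le> \<bar>b\<bar>" using assms by (simp add: abs_mult)
  consider "b > 0" | "b = 0" | "b < 0" by linarith
  then show ?thesis
  proof cases
    case 1
    then have "b + t * d \<ge> 0" using td by (simp add: abs_le_iff)
    then show ?thesis using 1 by simp
  next
    case 2 then show ?thesis using td by simp
  next
    case 3
    then have "b + t * d \<le> 0" using td by (simp add: abs_le_iff)
    then show ?thesis using 3 by simp
  qed
qed


lemma lasso_sparse:
  fixes A :: "'q \<Rightarrow> 'k \<Rightarrow> real"
  assumes K: "finite K" and N: "finite N" and c: "\<And>q. q \<in> N \<Longrightarrow> c q \<ge> 0" and w: "\<And>k. k \<in> K \<Longrightarrow> w k > 0"
  shows "\<exists>b. (\<forall>k. k \<notin> K \<longrightarrow> b k = 0) \<and> (\<forall>b'. (\<forall>k. k \<notin> K \<longrightarrow> b' k = 0) \<longrightarrow> lassoF N K c y A w b \<le> lassoF N K c y A w b')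
     \<and> card {k\<in>K. b k \<noteq> 0} \<le> card N"
proof -
  let ?F = "lassoF N K c y A w"
  define isMin where "isMin b \<longleftrightarrow> (\<forall>k. k \<notin> K \<longrightarrow> b k = 0) \<and> (\<forall>b'. (\<forall>k. k \<notin> K \<longrightarrow> b' k = 0) \<longrightarrow> ?F b \<le> ?F b')" for b
  obtain b0 where b0: "(\<forall>k. k \<notin> K \<longrightarrow> b0 k = 0) \<and> (\<forall>b'. (\<forall>k. k \<notin> K \<longrightarrow> b' k = 0) \<longrightarrow> ?F b0 \<le> ?F b')"
    using lasso_exists[of K N c w y A] K N c w by blast
  have "isMin b0" unfolding isMin_def by (rule b0)
  from ex_has_least_nat[of isMin b0 "\<lambda>b. card {k\<in>K. b k \<noteq> 0}", OF this]
  obtain b where bmin: "isMin b" and least0: "\<forall>b'. isMin b' \<longrightarrow> card {k\<in>K. b k \<noteq> 0} \<le> card {k\<in>K. b' k \<noteq> 0}"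
    by blast
  have least: "\<And>b'. isMin b' \<Longrightarrow> card {k\<in>K. b k \<noteq> 0} \<le> card {k\<in>K. b' k \<noteq> 0}"
    using least0 by blast
  have bK: "\<And>k. k \<notin> K \<Longrightarrow> b k = 0" and bopt: "\<And>b'. (\<forall>k. k \<notin> K \<longrightarrow> b' k = 0) \<Longrightarrow> ?F b \<le> ?F b'"
    using bmin unfolding isMin_def by auto
  define P where "P = {k\<in>K. b k \<noteq> 0}"
  have fP: "finite P" using K P_def by simp
  have "card P \<le> card N"
  proof (rule ccontr)
    assume "\<not> card P \<le> card N"
    then have "card N < card P" by simp
    then obtain d where dP: "\<And>k. k \<notin> P \<Longrightarrow> d k = 0" and dnz: "\<exists>k\<in>P. d k \<noteq> 0"
       and dA: "\<And>q. q \<in> N \<Longrightarrow> (\<Sum>k\<in>P. A q k * d k) = 0"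
      using homog[OF N fP, of A] by blast
    define D where "D = {k\<in>P. d k \<noteq> 0}"
    have fD: "finite D" and neD: "D \<noteq> {}" using fP dnz D_def by auto
    define t0 where "t0 = Min ((\<lambda>k. \<bar>b k / d k\<bar>) ` D)"
    have "t0 \<in> (\<lambda>k. \<bar>b k / d k\<bar>) ` D" unfolding t0_def using fD neD by (intro Min_in) auto
    then obtain k1 where k1: "k1 \<in> D" "t0 = \<bar>b k1 / d k1\<bar>" by blast
    have t0le: "t0 \<le> \<bar>b k / d k\<bar>" if "k \<in> D" for k
      unfolding t0_def using fD that by simp
    define s where "s = (\<Sum>k\<in>K. w k * (sgn (b k) * d k))"
    have PK: "P \<subseteq> K" unfolding P_def by auto
    have shift: "?F (\<lambda>k. b k + t * d k) = ?F b + t * s" if t: "\<bar>t\<bar> \<le> t0" for t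
    proof -
      have res: "(\<Sum>k\<in>K. A q k * (b k + t * d k)) = (\<Sum>k\<in>K. A q k * b k)" if q: "q \<in> N" for q
      proof -
        have "(\<Sum>k\<in>K. A q k * d k) = (\<Sum>k\<in>P. A q k * d k)"
          using PK K dP by (intro sum.mono_neutral_right) auto
        also have "\<dots> = 0" using dA q by simp
        finally have "(\<Sum>k\<in>K. A q k * d k) = 0" .
        have "(\<Sum>k\<in>K. A q k * (b k + t * d k)) = (\<Sum>k\<in>K. A q k * b k) + t * (\<Sum>k\<in>K. A q k * d k)"
          by (simp add: algebra_simps sum.distrib sum_distrib_left)
        then show ?thesis using \<open>(\<Sum>k\<in>K. A q k * d k) = 0\<close> by simp
      qed
      have l1: "w k * \<bar>b k + t * d k\<bar> = w k * \<bar>b k\<bar> + t * (w k * (sgn (b k) * d k))" if k: "k \<in> K" for k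
      proof (cases "d k = 0")
        case True then show ?thesis by simp
      next
        case False
        then have kD: "k \<in> D" using dP k unfolding D_def by auto
        hence bk: "b k \<noteq> 0" unfolding D_def P_def by auto
        have "\<bar>t\<bar> \<le> \<bar>b k / d k\<bar>" using t t0le[OF kD] by simp
        hence "\<bar>t\<bar> * \<bar>d k\<bar> \<le> \<bar>b k\<bar>" using False by (simp add: abs_divide field_simps)
        from abs_shift[OF this] show ?thesis by (simp add: algebra_simps)
      qed
      have "(\<Sum>k\<in>K. w k * \<bar>b k + t * d k\<bar>) = (\<Sum>k\<in>K. w k * \<bar>b k\<bar>) + t * s"
        unfolding s_def using l1 by (simp add: sum.distrib sum_distrib_left)
      then show ?thesis unfolding lassoF_def using res by simp
    qed
    define ts where "ts = - b k1 / d k1"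
    have d1: "d k1 \<noteq> 0" using k1 D_def by auto
    have ts_abs: "\<bar>ts\<bar> = t0" unfolding ts_def k1(2) by (simp add: abs_divide)
    have supp_d: "\<And>k. k \<notin> K \<Longrightarrow> d k = 0" using dP PK by auto
    have "?F b \<le> ?F (\<lambda>k. b k + ts * d k)" by (rule bopt) (auto simp: bK supp_d)
    moreover have "?F b \<le> ?F (\<lambda>k. b k + (- ts) * d k)" by (rule bopt) (auto simp: bK supp_d)
    ultimately have eq: "?F (\<lambda>k. b k + ts * d k) = ?F b"
      using shift[of ts] shift[of "-ts"] ts_abs by simp
    define bs where "bs = (\<lambda>k. b k + ts * d k)"
    have "isMin bs" unfolding isMin_def bs_def using eq bopt bK supp_d by auto
    hence le: "card P \<le> card {k\<in>K. bs k \<noteq> 0}" using least P_def by simp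
    have sub: "{k\<in>K. bs k \<noteq> 0} \<subseteq> P - {k1}"
    proof
      fix k assume k: "k \<in> {k\<in>K. bs k \<noteq> 0}"
      have "k \<in> P" using k dP unfolding bs_def P_def by fastforce
      moreover have "bs k1 = 0" unfolding bs_def ts_def using d1 by simp
      ultimately show "k \<in> P - {k1}" using k by auto
    qed
    have "k1 \<in> P" using k1 D_def by auto
    hence "card (P - {k1}) < card P" by (rule card_Diff1_less[OF fP])
    moreover have "card {k\<in>K. bs k \<noteq> 0} \<le> card (P - {k1})" using sub fP by (intro card_mono) auto
    ultimately show False using le by simp
  qed
  then show ?thesis using bmin unfolding isMin_def P_def by blast
qed


lemma sum_prod_split:
  fixes h :: "'a \<times> 'b \<Rightarrow> real"
  shows "(\<Sum>k\<in>A\<times>B. h k) = (\<Sum>a\<in>A. \<Sum>c\<in>B. h (a,c))"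
  by (simp add: sum.cartesian_product)

lemma sumQ1:
  fixes f :: "nat \<Rightarrow> real"
  assumes "m < p"
  shows "(\<Sum>k\<in>{..<p}\<times>{..<p}. (if fst k = m then f (snd k) else 0)) = (\<Sum>c<p. f c)"
proof -
  have "(\<Sum>k\<in>{..<p}\<times>{..<p}. (if fst k = m then f (snd k) else 0))
      = (\<Sum>a<p. \<Sum>c<p. (if a = m then f c else 0))"
    by (simp only: sum_prod_split fst_conv snd_conv)
  also have "\<dots> = (\<Sum>a<p. (if a = m then (\<Sum>c<p. f c) else 0))"
    by (intro sum.cong) auto
  also have "\<dots> = (\<Sum>c<p. f c)" using assms by (simp add: sum.delta)
  finally show ?thesis .
qed

lemma sumQ2:
  fixes f :: "nat \<Rightarrow> real"
  assumes "m < p"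
  shows "(\<Sum>k\<in>{..<p}\<times>{..<p}. (if snd k = m then f (fst k) else 0)) = (\<Sum>a<p. f a)"
proof -
  have "(\<Sum>k\<in>{..<p}\<times>{..<p}. (if snd k = m then f (fst k) else 0))
      = (\<Sum>a<p. \<Sum>c<p. (if c = m then f a else 0))"
    by (simp only: sum_prod_split fst_conv snd_conv)
  also have "\<dots> = (\<Sum>a<p. f a)" using assms by (simp add: sum.delta)
  finally show ?thesis .
qed

lemma sum_drop_m:
  fixes h :: "nat \<Rightarrow> real"
  assumes "m < p" "h m = 0"
  shows "(\<Sum>j\<in>{..<p} - {m}. h j) = (\<Sum>j<p. h j)"
  using assms by (simp add: sum_diff1)

lemma sum_K_Q:
  fixes h :: "nat \<times> nat \<Rightarrow> real"
  assumes "K \<subseteq> {..<p}\<times>{..<p}" "\<And>k. k \<in> {..<p}\<times>{..<p} \<Longrightarrow> k \<notin> K \<Longrightarrow> h k = 0"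
  shows "(\<Sum>k\<in>K. h k) = (\<Sum>k\<in>{..<p}\<times>{..<p}. h k)"
  using assms by (intro sum.mono_neutral_left) auto

lemma splice_part:
  fixes X :: "nat \<Rightarrow> nat \<Rightarrow> real"
  assumes lam: "lam > 0" and dp: "diag_pos p D"
  shows "\<exists>B. zero_diag p B \<and> (\<forall>B'. zero_diag p B' \<longrightarrow> splice_obj n p X lam D B \<le> splice_obj n p X lam D B') \<and> card_vech p (splice_est D B) \<le> n * p"
proof -
  define K where "K = {k \<in> {..<p}\<times>{..<p}. fst k \<noteq> snd k}"
  define N where "N = {..<p} \<times> {..<n}"
  define A where "A = (\<lambda>(q::nat\<times>nat) (k::nat\<times>nat). if fst k = fst q then X (snd q) (snd k) else 0)"
  define c where "c = (\<lambda>q::nat\<times>nat. 1/2 * (1 / (D (fst q) (fst q))^2))"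
  define y where "y = (\<lambda>q::nat\<times>nat. X (snd q) (fst q))"
  define w where "w = (\<lambda>k::nat\<times>nat. lam)"
  have fK: "finite K" unfolding K_def by simp
  have fN: "finite N" unfolding N_def by simp
  have KQ: "K \<subseteq> {..<p}\<times>{..<p}" unfolding K_def by auto
  have key: "splice_obj n p X lam D (\<lambda>i j. b (i,j)) = -(1/2) * ln (detp p D) + lassoF N K c y A w b"
    if bK: "\<forall>k. k \<notin> K \<longrightarrow> b k = 0" for b
  proof -
    have l1: "l1 p (\<lambda>i j. b (i,j)) = (\<Sum>k\<in>K. \<bar>b k\<bar>)"
    proof -
      have "l1 p (\<lambda>i j. b (i,j)) = (\<Sum>k\<in>{..<p}\<times>{..<p}. \<bar>b k\<bar>)" unfolding l1_def by (simp add: sum_prod_split)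
      also have "\<dots> = (\<Sum>k\<in>K. \<bar>b k\<bar>)" using KQ bK by (intro sum_K_Q[symmetric]) auto
      finally show ?thesis .
    qed
    have res: "(\<Sum>j\<in>{..<p} - {m}. b (m,j) * X i j) = (\<Sum>k\<in>K. A (m,i) k * b k)" if m: "m < p" for m i
    proof -
      have bmm: "b (m,m) = 0" using bK unfolding K_def by auto
      have "(\<Sum>k\<in>K. A (m,i) k * b k) = (\<Sum>k\<in>{..<p}\<times>{..<p}. A (m,i) k * b k)"
        using KQ bK by (intro sum_K_Q) auto
      also have "\<dots> = (\<Sum>k\<in>{..<p}\<times>{..<p}. (if fst k = m then X i (snd k) * b (m, snd k) else 0))"
        unfolding A_def by (intro sum.cong) (auto simp: prod_eq_iff)
      also have "\<dots> = (\<Sum>j<p. X i j * b (m,j))" by (rule sumQ1[OF m])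
      also have "\<dots> = (\<Sum>j\<in>{..<p} - {m}. b (m,j) * X i j)" using m bmm by (subst sum_drop_m) (auto simp: mult.commute)
      finally show ?thesis by simp
    qed
    have "(\<Sum>q\<in>N. c q * (y q - (\<Sum>k\<in>K. A q k * b k))^2)
        = (\<Sum>m<p. \<Sum>i<n. 1/2 * (1 / (D m m)^2) * (X i m - (\<Sum>j\<in>{..<p} - {m}. b (m,j) * X i j))^2)"
      unfolding N_def sum_prod_split by (intro sum.cong refl) (simp add: c_def y_def res)
    also have "\<dots> = (1/2) * (\<Sum>m<p. (1 / (D m m)^2) * sqn n (\<lambda>i. X i m - (\<Sum>j\<in>{..<p} - {m}. b (m,j) * X i j)))"
      unfolding sqn_def by (simp add: sum_distrib_left mult.assoc)
    finally have R: "(\<Sum>q\<in>N. c q * (y q - (\<Sum>k\<in>K. A q k * b k))^2) = \<dots>" .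
    have W: "(\<Sum>k\<in>K. w k * \<bar>b k\<bar>) = lam * l1 p (\<lambda>i j. b (i,j))" unfolding w_def l1 by (simp add: sum_distrib_left)
    show ?thesis unfolding splice_obj_def lassoF_def R W by simp
  qed
  have c0: "c q \<ge> 0" for q unfolding c_def by simp
  have w0: "w k > 0" for k unfolding w_def using lam by simp
  obtain b where bK: "\<forall>k. k \<notin> K \<longrightarrow> b k = 0"
    and bopt: "\<forall>b'. (\<forall>k. k \<notin> K \<longrightarrow> b' k = 0) \<longrightarrow> lassoF N K c y A w b \<le> lassoF N K c y A w b'"
    and bcard: "card {k\<in>K. b k \<noteq> 0} \<le> card N"
    using lasso_sparse[of K N c w y A] fK fN c0 w0 by blast
  define B where "B = (\<lambda>i j. b (i,j))"
  show ?thesis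
  proof (intro exI[of _ B] conjI allI impI)
    show "zero_diag p B" unfolding zero_diag_def sq_mat_def B_def using bK unfolding K_def by auto
    fix B' assume zB': "zero_diag p B'"
    define b' where "b' = (\<lambda>k. B' (fst k) (snd k))"
    have b'K: "\<forall>k. k \<notin> K \<longrightarrow> b' k = 0" using zB' unfolding b'_def K_def zero_diag_def sq_mat_def by auto (meson leI)+
    have B'eq: "B' = (\<lambda>i j. b' (i,j))" unfolding b'_def by simp
    show "splice_obj n p X lam D B \<le> splice_obj n p X lam D B'"
      unfolding B'eq B_def key[OF bK] key[OF b'K] using bopt b'K by simp
  next
    have "card_vech p (splice_est D B) \<le> card {k\<in>K. b k \<noteq> 0}"
      unfolding card_vech_def
    proof (rule card_mono)
      show "finite {k\<in>K. b k \<noteq> 0}" using fK by simp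
      show "{(i, j). j < i \<and> i < p \<and> splice_est D B i j \<noteq> 0} \<subseteq> {k\<in>K. b k \<noteq> 0}"
        unfolding splice_est_def B_def K_def by auto
    qed
    also have "\<dots> \<le> card N" by (rule bcard)
    also have "card N = n * p" unfolding N_def by (simp add: card_cartesian_product)
    finally show "card_vech p (splice_est D B) \<le> n * p" .
  qed
qed

lemma space_part:
  fixes X :: "nat \<Rightarrow> nat \<Rightarrow> real"
  assumes lam: "lam > 0" and dp: "diag_pos p Od"
  shows "\<exists>Oo. zero_diag p Oo \<and> (\<forall>i j. Oo i j = Oo j i) \<and>
                 (\<forall>Oo'. zero_diag p Oo' \<and> (\<forall>i j. Oo' i j = Oo' j i) \<longrightarrow>
                        space_obj n p X lam Od Oo \<le> space_obj n p X lam Od Oo') \<and>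
                 card_vech p (\<lambda>i j. Od i j + Oo i j) \<le> n * p"
proof -
  define K where "K = {k \<in> {..<p}\<times>{..<p}. snd k < fst k}"
  define N where "N = {..<p} \<times> {..<n}"
  define g where "g = (\<lambda>m i j. sqrt (Od j j / Od m m) * X i j)"
  define A where "A = (\<lambda>(q::nat\<times>nat) (k::nat\<times>nat). (if fst k = fst q then g (fst q) (snd q) (snd k) else 0)
                       + (if snd k = fst q then g (fst q) (snd q) (fst k) else 0))"
  define c where "c = (\<lambda>q::nat\<times>nat. 1/2 * Od (fst q) (fst q))"
  define y where "y = (\<lambda>q::nat\<times>nat. X (snd q) (fst q))"
  define w where "w = (\<lambda>k::nat\<times>nat. 2 * lam)"
  have fK: "finite K" unfolding K_def by simp
  have fN: "finite N" unfolding N_def by simp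
  have KQ: "K \<subseteq> {..<p}\<times>{..<p}" unfolding K_def by auto
  have key: "space_obj n p X lam Od (\<lambda>i j. b (i,j) + b (j,i)) = -(1/2) * ln (detp p Od) + lassoF N K c y A w b"
    if bK: "\<forall>k. k \<notin> K \<longrightarrow> b k = 0" for b
  proof -
    have absplit: "\<bar>b (i,j) + b (j,i)\<bar> = \<bar>b (i,j)\<bar> + \<bar>b (j,i)\<bar>" for i j
    proof -
      have "b (i,j) = 0 \<or> b (j,i) = 0"
      proof (cases "j < i")
        case True
        then have "(j,i) \<notin> K" unfolding K_def by auto
        then show ?thesis using bK by blast
      next
        case False
        then have "(i,j) \<notin> K" unfolding K_def by auto
        then show ?thesis using bK by blast
      qed
      then show ?thesis by auto
    qed
    have l1: "l1 p (\<lambda>i j. b (i,j) + b (j,i)) = 2 * (\<Sum>k\<in>K. \<bar>b k\<bar>)"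
    proof -
      have "l1 p (\<lambda>i j. b (i,j) + b (j,i)) = (\<Sum>i<p. \<Sum>j<p. \<bar>b (i,j)\<bar>) + (\<Sum>i<p. \<Sum>j<p. \<bar>b (j,i)\<bar>)"
        unfolding l1_def absplit by (simp add: sum.distrib)
      also have "(\<Sum>i<p. \<Sum>j<p. \<bar>b (j,i)\<bar>) = (\<Sum>i<p. \<Sum>j<p. \<bar>b (i,j)\<bar>)" by (rule sum.swap)
      also have "(\<Sum>i<p. \<Sum>j<p. \<bar>b (i,j)\<bar>) = (\<Sum>k\<in>{..<p}\<times>{..<p}. \<bar>b k\<bar>)" by (simp add: sum_prod_split)
      also have "\<dots> = (\<Sum>k\<in>K. \<bar>b k\<bar>)" using KQ bK by (intro sum_K_Q[symmetric]) auto
      finally show ?thesis by simp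
    qed
    have res: "(\<Sum>j\<in>{..<p} - {m}. (b (m,j) + b (j,m)) * sqrt (Od j j / Od m m) * X i j) = (\<Sum>k\<in>K. A (m,i) k * b k)" if m: "m < p" for m i
    proof -
      have bmm: "b (m,m) = 0" using bK unfolding K_def by auto
      have "(\<Sum>k\<in>K. A (m,i) k * b k) = (\<Sum>k\<in>{..<p}\<times>{..<p}. A (m,i) k * b k)"
        using KQ bK by (intro sum_K_Q) auto
      also have "\<dots> = (\<Sum>k\<in>{..<p}\<times>{..<p}. (if fst k = m then g m i (snd k) * b (m, snd k) else 0))
                    + (\<Sum>k\<in>{..<p}\<times>{..<p}. (if snd k = m then g m i (fst k) * b (fst k, m) else 0))"
        unfolding sum.distrib[symmetric]
        by (intro sum.cong refl) (auto simp: A_def distrib_right prod_eq_iff)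
      also have "\<dots> = (\<Sum>j<p. g m i j * b (m,j)) + (\<Sum>j<p. g m i j * b (j,m))"
        using sumQ1[OF m, of "\<lambda>c. g m i c * b (m,c)"] sumQ2[OF m, of "\<lambda>a. g m i a * b (a,m)"] by simp
      also have "\<dots> = (\<Sum>j<p. (b (m,j) + b (j,m)) * sqrt (Od j j / Od m m) * X i j)"
        unfolding g_def sum.distrib[symmetric] by (intro sum.cong refl) (simp add: algebra_simps)
      also have "\<dots> = (\<Sum>j\<in>{..<p} - {m}. (b (m,j) + b (j,m)) * sqrt (Od j j / Od m m) * X i j)"
        using m bmm by (subst sum_drop_m) auto
      finally show ?thesis by simp
    qed
    have "(\<Sum>q\<in>N. c q * (y q - (\<Sum>k\<in>K. A q k * b k))^2)
        = (\<Sum>m<p. \<Sum>i<n. 1/2 * Od m m * (X i m - (\<Sum>j\<in>{..<p} - {m}. (b (m,j) + b (j,m)) * sqrt (Od j j / Od m m) * X i j))^2)"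
      unfolding N_def sum_prod_split by (intro sum.cong refl) (simp add: c_def y_def res)
    also have "\<dots> = (1/2) * (\<Sum>m<p. Od m m * sqn n (\<lambda>i. X i m - (\<Sum>j\<in>{..<p} - {m}. (b (m,j) + b (j,m)) * sqrt (Od j j / Od m m) * X i j)))"
      unfolding sqn_def by (simp add: sum_distrib_left mult.assoc)
    finally have R: "(\<Sum>q\<in>N. c q * (y q - (\<Sum>k\<in>K. A q k * b k))^2) = \<dots>" .
    have W: "(\<Sum>k\<in>K. w k * \<bar>b k\<bar>) = lam * l1 p (\<lambda>i j. b (i,j) + b (j,i))" unfolding w_def l1 by (simp add: sum_distrib_left mult.assoc mult.left_commute)
    show ?thesis unfolding space_obj_def lassoF_def R W by simp
  qed
  have c0: "c q \<ge> 0" if "q \<in> N" for q using dp that unfolding c_def diag_pos_def N_def by (auto intro: less_imp_le)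
  have w0: "w k > 0" for k unfolding w_def using lam by simp
  obtain b where bK: "\<forall>k. k \<notin> K \<longrightarrow> b k = 0"
    and bopt: "\<forall>b'. (\<forall>k. k \<notin> K \<longrightarrow> b' k = 0) \<longrightarrow> lassoF N K c y A w b \<le> lassoF N K c y A w b'"
    and bcard: "card {k\<in>K. b k \<noteq> 0} \<le> card N"
    using lasso_sparse[of K N c w y A] fK fN c0 w0 by blast
  define Oo where "Oo = (\<lambda>i j. b (i,j) + b (j,i))"
  show ?thesis
  proof (intro exI[of _ Oo] conjI allI impI)
    show "zero_diag p Oo" unfolding zero_diag_def sq_mat_def Oo_def using bK unfolding K_def by auto
    show "Oo i j = Oo j i" for i j unfolding Oo_def by simp
    fix Oo' assume zO: "zero_diag p Oo' \<and> (\<forall>i j. Oo' i j = Oo' j i)"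
    define b' where "b' = (\<lambda>k. if snd k < fst k then Oo' (fst k) (snd k) else 0)"
    have b'K: "\<forall>k. k \<notin> K \<longrightarrow> b' k = 0" using zO unfolding b'_def K_def zero_diag_def sq_mat_def by (auto simp: not_less)
    have O'eq: "Oo' = (\<lambda>i j. b' (i,j) + b' (j,i))"
    proof (intro ext)
      fix i j
      have sy: "Oo' i j = Oo' j i" using zO by blast
      have dg: "Oo' i i = 0" using zO unfolding zero_diag_def by blast
      consider "j < i" | "i = j" | "i < j" using linorder_cases by blast
      then show "Oo' i j = b' (i,j) + b' (j,i)"
      proof cases
        case 1 then show ?thesis unfolding b'_def by simp
      next
        case 2 then show ?thesis unfolding b'_def using dg by simp
      next
        case 3 then show ?thesis unfolding b'_def using sy by simp
      qed
    qed
    show "space_obj n p X lam Od Oo \<le> space_obj n p X lam Od Oo'"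
      unfolding O'eq Oo_def key[OF bK] key[OF b'K] using bopt b'K by simp
  next
    have "card_vech p (\<lambda>i j. Od i j + Oo i j) \<le> card {k\<in>K. b k \<noteq> 0}"
      unfolding card_vech_def
    proof (rule card_mono)
      show "finite {k\<in>K. b k \<noteq> 0}" using fK by simp
      have "\<And>i j. j < i \<Longrightarrow> Od i j = 0" using dp unfolding diag_pos_def by auto
      moreover have "\<And>i j. j < i \<Longrightarrow> b (j,i) = 0" using bK unfolding K_def by auto
      ultimately show "{(i, j). j < i \<and> i < p \<and> Od i j + Oo i j \<noteq> 0} \<subseteq> {k\<in>K. b k \<noteq> 0}"
        unfolding Oo_def K_def by auto
    qed
    also have "\<dots> \<le> card N" by (rule bcard)
    also have "card N = n * p" unfolding N_def by (simp add: card_cartesian_product)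
    finally show "card_vech p (\<lambda>i j. Od i j + Oo i j) \<le> n * p" .
  qed
qed


theorem corollary1:
  fixes n p :: nat and X :: "nat \<Rightarrow> nat \<Rightarrow> real" and lam :: real
  assumes lam: "lam > 0"
    and np: "real (n * p) < real p * (real p - 1) / 2"
  shows "(\<forall>D. diag_pos p D \<longrightarrow>
            (\<exists>B. zero_diag p B \<and>
                 (\<forall>B'. zero_diag p B' \<longrightarrow> splice_obj n p X lam D B \<le> splice_obj n p X lam D B') \<and>
                 card_vech p (splice_est D B) \<le> n * p))
       \<and> (\<forall>Od. diag_pos p Od \<longrightarrow>
            (\<exists>Oo. zero_diag p Oo \<and> (\<forall>i j. Oo i j = Oo j i) \<and>
                 (\<forall>Oo'. zero_diag p Oo' \<and> (\<forall>i j. Oo' i j = Oo' j i) \<longrightarrow>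
                        space_obj n p X lam Od Oo \<le> space_obj n p X lam Od Oo') \<and>
                 card_vech p (\<lambda>i j. Od i j + Oo i j) \<le> n * p))"
    using splice_part[OF lam] space_part[OF lam] by blast

end
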